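(* Let $\mathcal{A}\subset[\mathbb{N}]^{<\infty}$ be hereditary and compact, let $P\subset\mathbb{N}$ be infinite and $\alpha<\omega_1$. Then $\mathcal{A}$ is $\alpha$-large on $P$ if and only if $\mathrm{CB}(\mathcal{A}\cap[Q]^{<\infty})\ge\alpha+1$ for every infinite $Q\subset P$.
   Context: $[M]^{<\infty}$ = finite subsets of $M$, with the topology of pointwise convergence of characteristic functions. For hereditary compact $\mathcal{A}$: $\mathcal{A}^{(1)}=\{A\in\mathcal{A}:\exists N\subset\mathbb{N}\text{ infinite},\ \forall n\in N\ A\cup\{n\}\in\mathcal{A}\}$, $\mathcal{A}^{(0)}=\mathcal{A}$, $\mathcal{A}^{(\beta+1)}=(\mathcal{A}^{(\beta)})^{(1)}$, $\mathcal{A}^{(\alpha)}=\bigcap_{\beta<\alpha}\mathcal{A}^{(\beta)}$ for limit $\alpha$, and $\mathrm{CB}(\mathcal{A})=\min\{\alpha<\omega_1:\mathcal{A}^{(\alpha)}=\emptyset\}$. Transfinite family: given finite sets $A_n(\alpha)\subset[0,\alpha)$ for each countable limit $\alpha$, increasing in $n$ with $\max A_n(\alpha)\to\alpha$, set $\mathcal{F}_0=\{\emptyset\}$, $\mathcal{F}_{\beta+1}=\{\{n\}\cup E:n\in\mathbb{N},E\in\mathcal{F}_\beta\}\cup\{\emptyset\}$, and for limit $\alpha$, $\mathcal{F}_\alpha=\{\emptyset\}\cup\{E\ne\emptyset:E\in\bigcup_{\beta\in A_{\min E}(\alpha)}\mathcal{F}_\beta\}$. For $N=\{n_1<n_2<\dots\}$,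 $\mathcal{F}^N=\{\{n_i:i\in E\}:E\in\mathcal{F}\}$. $\mathcal{A}$ is $\alpha$-large on $P$ if every infinite $M\subset P$ contains an infinite $N$ with $\mathcal{F}_\alpha^N\subset\mathcal{A}$ (this is independent of the chosen transfinite family). *)

theory Defs
  imports "HOL-Analysis.Analysis" "HOL-Library.Infinite_Set"
begin

text \<open>Countable ordinals: an ordinal alpha < omega_1 is represented as an element x of the
field of a well-order r on a countable set; alpha is the order type of the strict initial
segment below x, and the ordinals beta \<le> alpha are the elements y with (y,x) in r.\<close>

definition ord_less :: "'a rel \<Rightarrow> 'a \<Rightarrow> 'a \<Rightarrow> bool" where
  "ord_less r y z \<longleftrightarrow> (y, z) \<in> r \<and> y \<noteq> z"

definition is_zero :: "'a rel \<Rightarrow> 'a \<Rightarrow> bool" where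
  "is_zero r y \<longleftrightarrow> y \<in> Field r \<and> \<not> (\<exists>z. ord_less r z y)"

definition is_succ_of :: "'a rel \<Rightarrow> 'a \<Rightarrow> 'a \<Rightarrow> bool" where
  "is_succ_of r p y \<longleftrightarrow> ord_less r p y \<and> \<not> (\<exists>z. ord_less r p z \<and> ord_less r z y)"

definition is_limit :: "'a rel \<Rightarrow> 'a \<Rightarrow> bool" where
  "is_limit r y \<longleftrightarrow> y \<in> Field r \<and> (\<exists>z. ord_less r z y) \<and> \<not> (\<exists>p. is_succ_of r p y)"

definition derive1 :: "nat set set \<Rightarrow> nat set set" where
  "derive1 \<A> = {S \<in> \<A>. \<exists>N::nat set. infinite N \<and> (\<forall>n\<in>N. insert n S \<in> \<A>)}"

definition deriv :: "'a rel \<Rightarrow> nat set set \<Rightarrow> 'a \<Rightarrow> nat set set" where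
  "deriv r \<A> = wfrec (r - Id) (\<lambda>f y.
     if is_zero r y then \<A>
     else if (\<exists>p. is_succ_of r p y) then derive1 (f (THE p. is_succ_of r p y))
     else \<Inter> {f z | z. ord_less r z y})"

text \<open>CB(B) \<ge> alpha + 1, where alpha is the ordinal represented by x:
  there is no gamma \<le> alpha with B^(gamma) empty.\<close>

definition CB_ge_succ :: "'a rel \<Rightarrow> 'a \<Rightarrow> nat set set \<Rightarrow> bool" where
  "CB_ge_succ r x \<B> \<longleftrightarrow> (\<forall>y. (y, x) \<in> r \<longrightarrow> deriv r \<B> y \<noteq> {})"

definition hereditary :: "nat set set \<Rightarrow> bool" where
  "hereditary \<A> \<longleftrightarrow> (\<forall>S\<in>\<A>. \<forall>T. T \<subseteq> S \<longrightarrow> T \<in> \<A>)"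

text \<open>Characteristic function; nat \<Rightarrow> real carries the product topology
  (pointwise convergence).\<close>

definition charf :: "nat set \<Rightarrow> (nat \<Rightarrow> real)" where
  "charf S = (\<lambda>n. if n \<in> S then 1 else 0)"

definition compact_family :: "nat set set \<Rightarrow> bool" where
  "compact_family \<A> \<longleftrightarrow> compact (charf ` \<A>)"

definition transfinite_data :: "'a rel \<Rightarrow> ('a \<Rightarrow> nat \<Rightarrow> 'a set) \<Rightarrow> bool" where
  "transfinite_data r Af \<longleftrightarrow> (\<forall>y. is_limit r y \<longrightarrow>
      (\<forall>n. finite (Af y n) \<and> (\<forall>z\<in>Af y n. ord_less r z y) \<and> Af y n \<subseteq> Af y (Suc n)) \<and>
      (\<forall>z. ord_less r z y \<longrightarrow> (\<exists>n0. \<forall>n\<ge>n0. \<exists>w\<in>Af y n. (z, w) \<in> r)))"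

definition famF :: "'a rel \<Rightarrow> ('a \<Rightarrow> nat \<Rightarrow> 'a set) \<Rightarrow> 'a \<Rightarrow> nat set set" where
  "famF r Af = wfrec (r - Id) (\<lambda>f y.
     if is_zero r y then {{}}
     else if (\<exists>p. is_succ_of r p y)
       then {insert n E | n E. E \<in> f (THE p. is_succ_of r p y)} \<union> {{}}
     else {{}} \<union> {E. E \<noteq> {} \<and> (\<exists>z\<in>Af y (Min E). E \<in> f z)})"

text \<open>F^N, with N = {n_0 < n_1 < ...} enumerated from index 0.\<close>

definition famF_on :: "nat set set \<Rightarrow> nat set \<Rightarrow> nat set set" where
  "famF_on \<F> N = (\<lambda>E. enumerate N ` E) ` \<F>"

definition large :: "'a rel \<Rightarrow> ('a \<Rightarrow> nat \<Rightarrow> 'a set) \<Rightarrow> 'a \<Rightarrow> nat set set \<Rightarrow> nat set \<Rightarrow> bool" where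
  "large r Af x \<A> P \<longleftrightarrow> (\<forall>M. M \<subseteq> P \<and> infinite M \<longrightarrow>
      (\<exists>N. N \<subseteq> M \<and> infinite N \<and> famF_on (famF r Af x) N \<subseteq> \<A>))"

end

theory Submission
  imports Defs
begin


lemma enum_range: "strict_mono (f::nat \<Rightarrow> nat) \<Longrightarrow> enumerate (range f) n = f n"
proof (induction n)
  case 0
  show ?case unfolding enumerate_0
  proof (rule Least_equality)
    show "f 0 \<in> range f" by simp
    fix y assume "y \<in> range f"
    then obtain k where "y = f k" by blast
    then show "f 0 \<le> y" using 0 by (simp add: strict_mono_less_eq)
  qed
next
  case (Suc n)
  have inf: "infinite (range f)" using Suc.prems strict_mono_imp_inj_on finite_imageD by blast
  show ?case unfolding enumerate_Suc''[OF inf] Suc.IH[OF Suc.prems]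
  proof (rule Least_equality)
    show "f (Suc n) \<in> range f \<and> f n < f (Suc n)" using Suc.prems by (simp add: strict_mono_less)
    fix y assume "y \<in> range f \<and> f n < y"
    then obtain k where "y = f k" "f n < f k" by blast
    then show "f (Suc n) \<le> y" using Suc.prems
      by (metis Suc_leI strict_mono_less strict_mono_less_eq)
  qed
qed

lemma enum_chain:
  fixes f :: "nat \<Rightarrow> nat"
  assumes L: "infinite L" and sm: "strict_mono f" and inL: "\<forall>j\<ge>a. f j \<in> L"
    and base: "enumerate L a \<le> f a" and ja: "a \<le> j"
  shows "enumerate L j \<le> f j"
  using ja
proof (induction j rule: dec_induct)
  case base then show ?case using assms by simp
next
  case (step j)
  have "enumerate L (Suc j) = (LEAST s. s \<in> L \<and> enumerate L j < s)"
    using enumerate_Suc''[OF L] .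
  also have "\<dots> \<le> f (Suc j)"
  proof (rule Least_le)
    have "f j < f (Suc j)" using sm by (simp add: strict_mono_less)
    then show "f (Suc j) \<in> L \<and> enumerate L j < f (Suc j)" using step inL by simp
  qed
  finally show ?case .
qed

lemma enum_subset:
  fixes N N' :: "nat set"
  assumes "infinite N'" "N' \<subseteq> N"
  shows "enumerate N j \<le> enumerate N' j"
proof -
  have N: "infinite N" using assms infinite_super by blast
  have "enumerate N 0 \<le> enumerate N' 0"
    unfolding enumerate_0[of N] using enumerate_in_set[OF assms(1), of 0] assms(2)
    by (simp add: Least_le subset_iff)
  then show ?thesis
    using enum_chain[OF N strict_mono_enumerate[OF assms(1)], of 0 j] enumerate_in_set[OF assms(1)] assms(2)
    by blast
qed

lemma diag:
  fixes M :: "nat set" and R :: "nat \<Rightarrow> nat \<Rightarrow> nat set \<Rightarrow> bool"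
  assumes M: "infinite M"
    and step: "\<And>k Q. Q \<subseteq> M \<Longrightarrow> infinite Q \<Longrightarrow> \<exists>n L. n \<in> Q \<and> L \<subseteq> Q \<and> infinite L \<and> R k n L"
  shows "\<exists>f Ls. strict_mono f \<and> (\<forall>j. f j \<in> M) \<and> (\<forall>k. R k (f k) (Ls k) \<and> infinite (Ls k)) \<and>
     (\<forall>k j. k < j \<longrightarrow> f j \<in> Ls k \<and> enumerate (Ls k) j \<le> f j)"
proof -
  define C where "C k Q = (SOME nl. fst nl \<in> Q \<and> snd nl \<subseteq> Q \<and> infinite (snd nl) \<and> R k (fst nl) (snd nl))"
    for k Q
  have C: "fst (C k Q) \<in> Q \<and> snd (C k Q) \<subseteq> Q \<and> infinite (snd (C k Q)) \<and> R k (fst (C k Q)) (snd (C k Q))"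
    if QQ: "Q \<subseteq> M" "infinite Q" for k Q
  proof -
    obtain n L where "n \<in> Q \<and> L \<subseteq> Q \<and> infinite L \<and> R k n L" using step[OF QQ] by blast
    then have "\<exists>nl. fst nl \<in> Q \<and> snd nl \<subseteq> Q \<and> infinite (snd nl) \<and> R k (fst nl) (snd nl)"
      by (metis fst_conv snd_conv)
    then show ?thesis unfolding C_def by (rule someI_ex)
  qed
  define nxt where "nxt k Q = {q \<in> snd (C k Q). fst (C k Q) < q \<and> enumerate (snd (C k Q)) (Suc k) \<le> q}"
    for k Q
  define Qs where "Qs = rec_nat M nxt"
  have Qs0: "Qs 0 = M" unfolding Qs_def by simp
  have QsS: "Qs (Suc k) = nxt k (Qs k)" for k unfolding Qs_def by simp
  have inv: "Qs k \<subseteq> M \<and> infinite (Qs k)" for k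
  proof (induction k)
    case 0 then show ?case using Qs0 M by simp
  next
    case (Suc k)
    let ?Q = "Qs k"
    have c: "fst (C k ?Q) \<in> ?Q \<and> snd (C k ?Q) \<subseteq> ?Q \<and> infinite (snd (C k ?Q))"
      using C[of ?Q k] Suc by blast
    let ?b = "max (Suc (fst (C k ?Q))) (enumerate (snd (C k ?Q)) (Suc k))"
    have "nxt k ?Q = snd (C k ?Q) - {..<?b}" unfolding nxt_def by auto
    then have "infinite (nxt k ?Q)" using c by simp
    moreover have "nxt k ?Q \<subseteq> M" using c Suc unfolding nxt_def by blast
    ultimately show ?case by (simp add: QsS)
  qed
  define f where "f k = fst (C k (Qs k))" for k
  define Ls where "Ls k = snd (C k (Qs k))" for k
  have fC: "f k \<in> Qs k \<and> Ls k \<subseteq> Qs k \<and> infinite (Ls k) \<and> R k (f k) (Ls k)" for k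
    using C[of "Qs k" k] inv[of k] unfolding f_def Ls_def by blast
  have nxtk: "Qs (Suc k) = {q \<in> Ls k. f k < q \<and> enumerate (Ls k) (Suc k) \<le> q}" for k
    unfolding QsS nxt_def f_def Ls_def by simp
  have dec: "Qs j \<subseteq> Qs k" if "k \<le> j" for k j
    using that
  proof (induction j rule: dec_induct)
    case base then show ?case by simp
  next
    case (step j) then show ?case using nxtk[of j] fC[of j] by blast
  qed
  have sm: "strict_mono f"
    unfolding strict_mono_Suc_iff using fC nxtk by blast
  have fM: "f j \<in> M" for j using fC inv by blast
  have inLs: "f j \<in> Ls k" if "k < j" for k j
  proof -
    have "f j \<in> Qs (Suc k)" using fC[of j] dec[of "Suc k" j] that by auto
    then show ?thesis using nxtk by blast
  qed
  have en: "enumerate (Ls k) j \<le> f j" if "k < j" for k j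
  proof (rule enum_chain[OF _ sm, of "Ls k" "Suc k" j])
    show "infinite (Ls k)" using fC by blast
    show "\<forall>j\<ge>Suc k. f j \<in> Ls k" using inLs by auto
    show "enumerate (Ls k) (Suc k) \<le> f (Suc k)" using fC[of "Suc k"] nxtk[of k] by blast
    show "Suc k \<le> j" using that by simp
  qed
  show ?thesis using sm fM fC inLs en by blast
qed

context
  fixes r :: "'a rel"
  assumes wo: "Well_order r"
begin

lemma wfR: "wf (r - Id)"
  using wo unfolding well_order_on_def by blast

lemma ordR: "(z, y) \<in> r - Id \<longleftrightarrow> ord_less r z y"
  unfolding ord_less_def by auto

lemma ord_induct:
  assumes "\<And>y. (\<And>z. ord_less r z y \<Longrightarrow> P z) \<Longrightarrow> P y"
  shows "P y"
  using wfR
proof (induction y rule: wf_induct_rule)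
  case (less x)
  then show ?case using assms ordR by blast
qed

lemma ord_less_Field: "ord_less r z y \<Longrightarrow> z \<in> Field r \<and> y \<in> Field r"
  unfolding ord_less_def by (auto simp: Field_def)

lemma lin: "Linear_order r" using wo by (simp add: well_order_on_def)
lemma po: "Partial_order r" using lin by (simp add: linear_order_on_def)
lemma pre: "Preorder r" using po by (simp add: partial_order_on_def)
lemma total_r: "y \<in> Field r \<Longrightarrow> z \<in> Field r \<Longrightarrow> (y, z) \<in> r \<or> (z, y) \<in> r"
  using lin unfolding linear_order_on_def total_on_def
  by (metis pre preorder_on_def refl_onD)
lemma refl_r: "y \<in> Field r \<Longrightarrow> (y, y) \<in> r"
  using pre unfolding preorder_on_def refl_on_def by blast
lemma antisym_r: "(y, z) \<in> r \<Longrightarrow> (z, y) \<in> r \<Longrightarrow> y = z"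
  using po unfolding partial_order_on_def antisym_def by blast
lemma trans_r: "(y, z) \<in> r \<Longrightarrow> (z, w) \<in> r \<Longrightarrow> (y, w) \<in> r"
  using pre unfolding preorder_on_def by (meson transD)
lemma succ_unique: "is_succ_of r p y \<Longrightarrow> is_succ_of r q y \<Longrightarrow> p = q"
proof (rule ccontr)
  assume a: "is_succ_of r p y" "is_succ_of r q y" "p \<noteq> q"
  then have "p \<in> Field r" "q \<in> Field r" unfolding is_succ_of_def using ord_less_Field by blast+
  then have "(p, q) \<in> r \<or> (q, p) \<in> r" using total_r by blast
  then have "ord_less r p q \<or> ord_less r q p" using a(3) unfolding ord_less_def by blast
  then show False using a(1,2) unfolding is_succ_of_def by blast
qed

lemma the_succ: "is_succ_of r p y \<Longrightarrow> (THE p. is_succ_of r p y) = p"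
  by (rule the_equality) (auto intro: succ_unique)

lemma ord_cases:
  assumes "y \<in> Field r"
  obtains "is_zero r y" | p where "is_succ_of r p y" | "is_limit r y"
  using assms unfolding is_zero_def is_limit_def by blast

lemma succ_not_zero: "is_succ_of r p y \<Longrightarrow> \<not> is_zero r y"
  unfolding is_succ_of_def is_zero_def by blast

lemma limit_not_zero: "is_limit r y \<Longrightarrow> \<not> is_zero r y"
  unfolding is_limit_def is_zero_def by blast

lemma limit_not_succ: "is_limit r y \<Longrightarrow> \<not> is_succ_of r p y"
  unfolding is_limit_def by blast

lemma deriv_unfold: "deriv r A y = (if is_zero r y then A
     else if (\<exists>p. is_succ_of r p y) then derive1 (cut (deriv r A) (r - Id) y (THE p. is_succ_of r p y))
     else \<Inter> {cut (deriv r A) (r - Id) y z | z. ord_less r z y})"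
  unfolding deriv_def by (subst wfrec[OF wfR]) simp

lemma deriv_zero: "is_zero r y \<Longrightarrow> deriv r A y = A"
  by (subst deriv_unfold) simp

lemma deriv_succ: "is_succ_of r p y \<Longrightarrow> deriv r A y = derive1 (deriv r A p)"
proof -
  assume a: "is_succ_of r p y"
  have "(p, y) \<in> r - Id" using a unfolding is_succ_of_def ordR by blast
  note pyR = this
  have e: "\<exists>p. is_succ_of r p y" using a by blast
  show ?thesis
    by (subst deriv_unfold)
      (simp only: e if_True if_False succ_not_zero[OF a] the_succ[OF a] cut_apply[OF pyR])
qed

lemma deriv_limit: "is_limit r y \<Longrightarrow> deriv r A y = \<Inter> {deriv r A z | z. ord_less r z y}"
  apply (subst deriv_unfold)
  using limit_not_zero[of y] limit_not_succ[of y]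
  apply simp
  apply (rule arg_cong[where f=Inter])
  by (metis (no_types, lifting) cut_apply ordR)

lemma field_induct[consumes 1, case_names zero succ limit]:
  assumes "y \<in> Field r"
    and Z: "\<And>y. is_zero r y \<Longrightarrow> P y"
    and S: "\<And>p y. is_succ_of r p y \<Longrightarrow> P p \<Longrightarrow> P y"
    and L: "\<And>y. is_limit r y \<Longrightarrow> (\<And>z. ord_less r z y \<Longrightarrow> P z) \<Longrightarrow> P y"
  shows "P y"
proof -
  have "y \<in> Field r \<longrightarrow> P y"
  proof (induction y rule: ord_induct)
    case (1 y)
    show ?case
    proof
      assume yF: "y \<in> Field r"
      show "P y"
      proof (cases rule: ord_cases[OF yF])
        case 1 then show ?thesis using Z by blast
      next
        case (2 p)
        then have "ord_less r p y" unfolding is_succ_of_def by blast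
        then show ?thesis using 2 S 1 ord_less_Field by blast
      next
        case 3 then show ?thesis using L 1 ord_less_Field by blast
      qed
    qed
  qed
  then show ?thesis using assms(1) by blast
qed

lemma derive1_sub: "derive1 X \<subseteq> X"
  unfolding derive1_def by blast

lemma derive1_mono: "X \<subseteq> Y \<Longrightarrow> derive1 X \<subseteq> derive1 Y"
  unfolding derive1_def by blast

lemma limit_has_less: "is_limit r y \<Longrightarrow> \<exists>z. ord_less r z y"
  unfolding is_limit_def by blast

lemma deriv_sub: "y \<in> Field r \<Longrightarrow> deriv r G y \<subseteq> G"
proof (induction y rule: field_induct)
  case (zero y) then show ?case by (simp add: deriv_zero)
next
  case (succ p y) then show ?case using derive1_sub by (simp add: deriv_succ) blast
next
  case (limit y)
  then obtain z where "ord_less r z y" using limit_has_less by blast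
  then show ?case using limit by (auto simp: deriv_limit)
qed

lemma deriv_mono: "y \<in> Field r \<Longrightarrow> G \<subseteq> H \<Longrightarrow> deriv r G y \<subseteq> deriv r H y"
proof (induction y rule: field_induct)
  case (zero y) then show ?case by (simp add: deriv_zero)
next
  case (succ p y) then show ?case using derive1_mono by (simp add: deriv_succ)
next
  case (limit y)
  show ?case unfolding deriv_limit[OF limit(1)]
  proof
    fix S assume S: "S \<in> \<Inter> {deriv r G z |z. ord_less r z y}"
    show "S \<in> \<Inter> {deriv r H z |z. ord_less r z y}"
    proof (rule InterI)
      fix X assume "X \<in> {deriv r H z |z. ord_less r z y}"
      then obtain z where z: "X = deriv r H z" "ord_less r z y" by blast
      then have "S \<in> deriv r G z" using S by blast
      then show "S \<in> X" using z limit.IH[OF z(2) limit.prems] by blast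
    qed
  qed
qed

lemma deriv_decr: "w \<in> Field r \<Longrightarrow> (y, w) \<in> r \<Longrightarrow> deriv r G w \<subseteq> deriv r G y"
proof (induction w arbitrary: y rule: field_induct)
  case (zero w)
  then have "y = w" unfolding is_zero_def ord_less_def by blast
  then show ?case by simp
next
  case (succ p w)
  show ?case
  proof (cases "y = w")
    case True then show ?thesis by simp
  next
    case False
    then have yw: "ord_less r y w" using succ unfolding ord_less_def by blast
    have pw: "ord_less r p w" using succ unfolding is_succ_of_def by blast
    have "y \<in> Field r" "p \<in> Field r" using yw pw ord_less_Field by blast+
    then have "(y, p) \<in> r"
      using total_r[of y p] refl_r succ(1) yw unfolding is_succ_of_def ord_less_def by blast
    then have "deriv r G p \<subseteq> deriv r G y" using succ by blast
    then show ?thesis using derive1_sub by (simp add: deriv_succ[OF succ(1)]) blast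
  qed
next
  case (limit w)
  show ?case
  proof (cases "y = w")
    case True then show ?thesis by simp
  next
    case False
    then have yw: "ord_less r y w" using limit unfolding ord_less_def by blast
    then show ?thesis by (auto simp: deriv_limit[OF limit(1)])
  qed
qed

lemma deriv_hered: "y \<in> Field r \<Longrightarrow> hereditary G \<Longrightarrow> hereditary (deriv r G y)"
proof (induction y rule: field_induct)
  case (zero y) then show ?case by (simp add: deriv_zero)
next
  case (succ p y)
  have h: "hereditary (deriv r G p)" using succ by blast
  show ?case unfolding deriv_succ[OF succ(1)] hereditary_def derive1_def
  proof (intro ballI allI impI)
    fix S T assume S: "S \<in> {S \<in> deriv r G p. \<exists>N. infinite N \<and> (\<forall>n\<in>N. insert n S \<in> deriv r G p)}"
      and T: "T \<subseteq> S"
    then obtain N where N: "infinite N" "\<forall>n\<in>N. insert n S \<in> deriv r G p" by blast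
    have "T \<in> deriv r G p" using S T h unfolding hereditary_def by blast
    moreover have "\<forall>n\<in>N. insert n T \<in> deriv r G p"
      using N(2) T h unfolding hereditary_def by (meson insert_mono)
    ultimately show "T \<in> {S \<in> deriv r G p. \<exists>N. infinite N \<and> (\<forall>n\<in>N. insert n S \<in> deriv r G p)}"
      using N(1) by blast
  qed
next
  case (limit y)
  then show ?case unfolding deriv_limit[OF limit(1)] hereditary_def by blast
qed

lemma deriv_shift_in: "y \<in> Field r \<Longrightarrow> S \<in> deriv r G y \<Longrightarrow> insert n S \<in> deriv r (insert n ` G) y"
proof (induction y arbitrary: S rule: field_induct)
  case (zero y) then show ?case by (simp add: deriv_zero)
next
  case (succ p y)
  from succ.prems obtain N where N: "infinite N" "S \<in> deriv r G p" "\<forall>m\<in>N. insert m S \<in> deriv r G p"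
    unfolding deriv_succ[OF succ(1)] derive1_def by blast
  have "insert n S \<in> deriv r (insert n ` G) p" using N succ.IH by blast
  moreover have "\<forall>m\<in>N. insert m (insert n S) \<in> deriv r (insert n ` G) p"
    using N succ.IH by (metis insert_commute)
  ultimately show ?case using N(1) unfolding deriv_succ[OF succ(1)] derive1_def by blast
next
  case (limit y)
  then show ?case unfolding deriv_limit[OF limit(1)] by blast
qed

lemma deriv_shift_out: "y \<in> Field r \<Longrightarrow> insert n S \<in> deriv r G y \<Longrightarrow> S \<in> deriv r {T. insert n T \<in> G} y"
proof (induction y arbitrary: S rule: field_induct)
  case (zero y) then show ?case by (simp add: deriv_zero)
next
  case (succ p y)
  from succ.prems obtain N where N: "infinite N" "insert n S \<in> deriv r G p"
    "\<forall>m\<in>N. insert m (insert n S) \<in> deriv r G p"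
    unfolding deriv_succ[OF succ(1)] derive1_def by blast
  have "S \<in> deriv r {T. insert n T \<in> G} p" using N succ.IH by blast
  moreover have "\<forall>m\<in>N. insert m S \<in> deriv r {T. insert n T \<in> G} p"
    using N succ.IH by (metis insert_commute)
  ultimately show ?case using N(1) unfolding deriv_succ[OF succ(1)] derive1_def by blast
next
  case (limit y)
  then show ?case unfolding deriv_limit[OF limit(1)] by blast
qed

lemma deriv_restrict:
  assumes "y \<in> Field r" "\<forall>S\<in>G. S \<subseteq> L" "finite (L - Q)"
  shows "S \<in> deriv r G y \<Longrightarrow> S \<subseteq> Q \<Longrightarrow> S \<in> deriv r (G \<inter> {S. S \<subseteq> Q}) y"
  using assms(1)
proof (induction y arbitrary: S rule: field_induct)
  case (zero y) then show ?case by (simp add: deriv_zero)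
next
  case (succ p y)
  have pF: "p \<in> Field r" using succ(1) ord_less_Field unfolding is_succ_of_def by blast
  from succ.prems obtain N where N: "infinite N" "S \<in> deriv r G p" "\<forall>m\<in>N. insert m S \<in> deriv r G p"
    unfolding deriv_succ[OF succ(1)] derive1_def by blast
  have NL: "N \<subseteq> L" using N(3) deriv_sub[OF pF] assms(2) by blast
  have "finite (N - Q)" using NL assms(3) by (meson Diff_mono finite_subset order_refl)
  then have inf: "infinite (N \<inter> Q)" using N(1)
    by (metis Diff_Diff_Int Diff_empty Diff_subset finite_Diff2 infinite_super)
  have "S \<in> deriv r (G \<inter> {S. S \<subseteq> Q}) p" using N succ by blast
  moreover have "\<forall>m\<in>N \<inter> Q. insert m S \<in> deriv r (G \<inter> {S. S \<subseteq> Q}) p"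
    using N succ by blast
  ultimately show ?case using inf unfolding deriv_succ[OF succ(1)] derive1_def by blast
next
  case (limit y)
  then show ?case unfolding deriv_limit[OF limit(1)] by blast
qed

lemma deriv_image:
  assumes "y \<in> Field r" "inj e"
  shows "S \<in> deriv r G y \<Longrightarrow> e ` S \<in> deriv r ((\<lambda>E. e ` E) ` G) y"
  using assms(1)
proof (induction y arbitrary: S rule: field_induct)
  case (zero y) then show ?case by (simp add: deriv_zero)
next
  case (succ p y)
  from succ.prems obtain N where N: "infinite N" "S \<in> deriv r G p" "\<forall>m\<in>N. insert m S \<in> deriv r G p"
    unfolding deriv_succ[OF succ(1)] derive1_def by blast
  have "infinite (e ` N)" using N(1) assms(2) by (meson finite_imageD inj_on_subset subset_UNIV)
  moreover have "e ` S \<in> deriv r ((\<lambda>E. e ` E) ` G) p" using N succ by blast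
  moreover have "\<forall>m\<in>e ` N. insert m (e ` S) \<in> deriv r ((\<lambda>E. e ` E) ` G) p"
    using N succ by (metis image_iff image_insert)
  ultimately show ?case unfolding deriv_succ[OF succ(1)] derive1_def by blast
next
  case (limit y)
  then show ?case unfolding deriv_limit[OF limit(1)] by blast
qed


lemma good_exists:
  fixes B :: "nat set set" and Q :: "nat set"
  assumes pF: "p \<in> Field r" and Qinf: "infinite Q"
    and Hq: "\<And>L. L \<subseteq> Q \<Longrightarrow> infinite L \<Longrightarrow>
       \<exists>m\<in>L. {} \<in> deriv r {T. insert m T \<in> B \<and> insert m T \<subseteq> L} p"
  shows "\<exists>Q' n. Q' \<subseteq> Q \<and> infinite Q' \<and> n \<in> Q \<and>
     (\<forall>Q''. Q'' \<subseteq> Q' \<and> infinite Q'' \<longrightarrow> {} \<in> deriv r ({T. insert n T \<in> B} \<inter> {S. S \<subseteq> Q''}) p)"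
proof (rule ccontr)
  assume "\<not> ?thesis"
  then have NG: "\<And>Q' n. Q' \<subseteq> Q \<Longrightarrow> infinite Q' \<Longrightarrow> n \<in> Q \<Longrightarrow>
     \<exists>Q''. Q'' \<subseteq> Q' \<and> infinite Q'' \<and> {} \<notin> deriv r ({T. insert n T \<in> B} \<inter> {S. S \<subseteq> Q''}) p"
    by blast
  define lst where "lst Q0 = (LEAST n. n \<in> Q0)" for Q0 :: "nat set"
  define nx where "nx Q0 = (SOME Q''. Q'' \<subseteq> Q0 \<inter> {lst Q0<..} \<and> infinite Q'' \<and>
      {} \<notin> deriv r ({T. insert (lst Q0) T \<in> B} \<inter> {S. S \<subseteq> Q''}) p)" for Q0
  have nxP: "nx Q0 \<subseteq> Q0 \<inter> {lst Q0<..} \<and> infinite (nx Q0) \<and>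
      {} \<notin> deriv r ({T. insert (lst Q0) T \<in> B} \<inter> {S. S \<subseteq> nx Q0}) p"
    if "Q0 \<subseteq> Q" "infinite Q0" for Q0
  proof -
    have l: "lst Q0 \<in> Q0" unfolding lst_def using that infinite_imp_nonempty by (metis LeastI ex_in_conv)
    have "Q0 \<inter> {lst Q0<..} = Q0 - {..lst Q0}" by auto
    then have "infinite (Q0 \<inter> {lst Q0<..})" using that by simp
    then have "\<exists>Q''. Q'' \<subseteq> Q0 \<inter> {lst Q0<..} \<and> infinite Q'' \<and>
      {} \<notin> deriv r ({T. insert (lst Q0) T \<in> B} \<inter> {S. S \<subseteq> Q''}) p"
      using NG[of "Q0 \<inter> {lst Q0<..}" "lst Q0"] that l by blast
    then show ?thesis unfolding nx_def by (rule someI_ex)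
  qed
  define Qs where "Qs = rec_nat Q (\<lambda>_. nx)"
  have Qs0: "Qs 0 = Q" unfolding Qs_def by simp
  have QsS: "Qs (Suc i) = nx (Qs i)" for i unfolding Qs_def by simp
  have inv: "Qs i \<subseteq> Q \<and> infinite (Qs i)" for i
  proof (induction i)
    case 0 then show ?case using Qs0 Qinf by simp
  next
    case (Suc i) then show ?case using nxP[of "Qs i"] QsS by auto
  qed
  define l where "l i = lst (Qs i)" for i
  have lin: "l i \<in> Qs i" for i
    unfolding l_def lst_def using inv[of i] infinite_imp_nonempty by (metis LeastI ex_in_conv)
  have stp: "Qs (Suc i) \<subseteq> Qs i \<inter> {l i<..}" for i using nxP[of "Qs i"] inv QsS l_def by auto
  have bad: "{} \<notin> deriv r ({T. insert (l i) T \<in> B} \<inter> {S. S \<subseteq> Qs (Suc i)}) p" for i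
    using nxP[of "Qs i"] inv QsS l_def by auto
  have dec: "Qs j \<subseteq> Qs k" if "k \<le> j" for k j
    using that
  proof (induction j rule: dec_induct)
    case base then show ?case by simp
  next
    case (step j) then show ?case using stp[of j] by blast
  qed
  have sm: "strict_mono l" unfolding strict_mono_Suc_iff using lin stp by blast
  let ?L = "range l"
  have LQ: "?L \<subseteq> Q" using lin inv by blast
  have Linf: "infinite ?L" using sm strict_mono_imp_inj_on finite_imageD by blast
  obtain m where m: "m \<in> ?L" "{} \<in> deriv r {T. insert m T \<in> B \<and> insert m T \<subseteq> ?L} p"
    using Hq[OF LQ Linf] by blast
  then obtain i where mi: "m = l i" by blast
  let ?G = "{T. insert m T \<in> B \<and> insert m T \<subseteq> ?L}"
  have GL: "\<forall>S\<in>?G. S \<subseteq> ?L" by blast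
  have fin: "finite (?L - Qs (Suc i))"
  proof -
    have "?L - Qs (Suc i) \<subseteq> l ` {..i}"
    proof
      fix x assume x: "x \<in> ?L - Qs (Suc i)"
      then obtain j where j: "x = l j" by blast
      have "\<not> Suc i \<le> j"
      proof
        assume "Suc i \<le> j"
        then have "l j \<in> Qs (Suc i)" using lin[of j] dec[of "Suc i" j] by blast
        then show False using x j by (metis DiffD2)
      qed
      then show "x \<in> l ` {..i}" using j by auto
    qed
    then show ?thesis using finite_subset by blast
  qed
  have "{} \<in> deriv r (?G \<inter> {S. S \<subseteq> Qs (Suc i)}) p"
    using deriv_restrict[OF pF GL fin m(2)] by simp
  moreover have "?G \<inter> {S. S \<subseteq> Qs (Suc i)} \<subseteq> {T. insert (l i) T \<in> B} \<inter> {S. S \<subseteq> Qs (Suc i)}"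
    using mi by blast
  ultimately show False using deriv_mono[OF pF] bad[of i] by blast
qed

context
  fixes Af :: "'a \<Rightarrow> nat \<Rightarrow> 'a set"
  assumes td: "transfinite_data r Af"
begin

lemma td_less: "is_limit r y \<Longrightarrow> z \<in> Af y n \<Longrightarrow> ord_less r z y"
  using td unfolding transfinite_data_def by blast

lemma td_finite: "is_limit r y \<Longrightarrow> finite (Af y n)"
  using td unfolding transfinite_data_def by blast

lemma td_mono: "is_limit r y \<Longrightarrow> m \<le> n \<Longrightarrow> Af y m \<subseteq> Af y n"
proof -
  assume l: "is_limit r y" and mn: "m \<le> n"
  have "\<And>k. Af y k \<subseteq> Af y (Suc k)" using td l unfolding transfinite_data_def by blast
  then show ?thesis using lift_Suc_mono_le[of "Af y", OF _ mn] by blast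
qed

lemma td_cof: "is_limit r y \<Longrightarrow> ord_less r z y \<Longrightarrow> \<exists>n w. w \<in> Af y n \<and> (z, w) \<in> r"
  using td unfolding transfinite_data_def by (meson order_refl)

lemma famF_unfold: "famF r Af y = (if is_zero r y then {{}}
     else if (\<exists>p. is_succ_of r p y)
       then {insert n E | n E. E \<in> cut (famF r Af) (r - Id) y (THE p. is_succ_of r p y)} \<union> {{}}
     else {{}} \<union> {E. E \<noteq> {} \<and> (\<exists>z\<in>Af y (Min E). E \<in> cut (famF r Af) (r - Id) y z)})"
  unfolding famF_def by (subst wfrec[OF wfR]) simp

lemma famF_zero: "is_zero r y \<Longrightarrow> famF r Af y = {{}}"
  by (subst famF_unfold) simp

lemma famF_succ: "is_succ_of r p y \<Longrightarrow> famF r Af y = {insert n E | n E. E \<in> famF r Af p} \<union> {{}}"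
proof -
  assume a: "is_succ_of r p y"
  have pyR: "(p, y) \<in> r - Id" using a unfolding is_succ_of_def ordR by blast
  have e: "\<exists>p. is_succ_of r p y" using a by blast
  show ?thesis
    by (subst famF_unfold)
      (simp only: e if_True if_False succ_not_zero[OF a] the_succ[OF a] cut_apply[OF pyR])
qed

lemma famF_limit: "is_limit r y \<Longrightarrow>
   famF r Af y = {{}} \<union> {E. E \<noteq> {} \<and> (\<exists>z\<in>Af y (Min E). E \<in> famF r Af z)}"
proof -
  assume a: "is_limit r y"
  have e: "\<not> (\<exists>p. is_succ_of r p y)" using a limit_not_succ by blast
  have c: "\<And>z E. z \<in> Af y (Min E) \<Longrightarrow> cut (famF r Af) (r - Id) y z = famF r Af z"
    using td_less[OF a] ordR cut_apply by metis
  have "famF r Af y = {{}} \<union> {E. E \<noteq> {} \<and> (\<exists>z\<in>Af y (Min E). E \<in> cut (famF r Af) (r - Id) y z)}"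
    by (subst famF_unfold) (simp only: e if_True if_False limit_not_zero[OF a] simp_thms)
  also have "\<dots> = {{}} \<union> {E. E \<noteq> {} \<and> (\<exists>z\<in>Af y (Min E). E \<in> famF r Af z)}"
    using c by (intro arg_cong2[where f="(\<union>)"] refl Collect_cong) (metis (no_types, lifting))
  finally show ?thesis .
qed

lemma famF_finite: "y \<in> Field r \<Longrightarrow> E \<in> famF r Af y \<Longrightarrow> finite E"
proof (induction y arbitrary: E rule: field_induct)
  case (zero y) then show ?case by (simp add: famF_zero)
next
  case (succ p y) then show ?case by (auto simp: famF_succ)
next
  case (limit y)
  then show ?case unfolding famF_limit[OF limit(1)] using td_less[OF limit(1)] by blast
qed

lemma famF_empty: assumes yF: "y \<in> Field r" shows "{} \<in> famF r Af y"
proof (cases rule: ord_cases[OF yF])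
  case 1 then show ?thesis by (simp add: famF_zero)
next
  case (2 p) then show ?thesis by (simp add: famF_succ)
next
  case 3 then show ?thesis by (simp add: famF_limit)
qed

lemma famF_succ_sub: "is_succ_of r p y \<Longrightarrow> E \<in> famF r Af p \<Longrightarrow> E \<in> famF r Af y"
proof -
  assume a: "is_succ_of r p y" and E: "E \<in> famF r Af p"
  show ?thesis
  proof (cases "E = {}")
    case True then show ?thesis by (simp add: famF_succ[OF a])
  next
    case False
    then obtain i where "i \<in> E" by blast
    then have "E = insert i E" by blast
    then show ?thesis using E by (auto simp: famF_succ[OF a])
  qed
qed

lemma Min_mono_sub: "finite E \<Longrightarrow> T \<subseteq> E \<Longrightarrow> T \<noteq> {} \<Longrightarrow> Min E \<le> Min (T::nat set)"
  by (simp add: Min.subset_imp)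

lemma famF_hered: "y \<in> Field r \<Longrightarrow> E \<in> famF r Af y \<Longrightarrow> T \<subseteq> E \<Longrightarrow> T \<in> famF r Af y"
proof (induction y arbitrary: E T rule: field_induct)
  case (zero y) then show ?case by (auto simp: famF_zero)
next
  case (succ p y)
  show ?case
  proof (cases "E = {}")
    case True then show ?thesis using succ by (auto simp: famF_succ[OF succ(1)])
  next
    case False
    then obtain n E0 where E: "E = insert n E0" "E0 \<in> famF r Af p"
      using succ.prems by (auto simp: famF_succ[OF succ(1)])
    show ?thesis
    proof (cases "n \<in> T")
      case True
      have "T - {n} \<in> famF r Af p" using succ.IH[OF E(2)] E succ.prems by blast
      moreover have "T = insert n (T - {n})" using True by blast
      ultimately show ?thesis by (unfold famF_succ[OF succ(1)]) blast
    next
      case False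
      then have "T \<subseteq> E0" using E succ.prems by blast
      then have "T \<in> famF r Af p" using succ.IH[OF E(2)] by blast
      then show ?thesis using famF_succ_sub[OF succ(1)] by blast
    qed
  qed
next
  case (limit y)
  show ?case
  proof (cases "T = {}")
    case True then show ?thesis by (simp add: famF_limit[OF limit(1)])
  next
    case False
    then have En: "E \<noteq> {}" using limit.prems by blast
    then obtain z where z: "z \<in> Af y (Min E)" "E \<in> famF r Af z"
      using limit.prems unfolding famF_limit[OF limit(1)] by blast
    have zl: "ord_less r z y" using td_less[OF limit(1) z(1)] .
    have fE: "finite E" using famF_finite z(2) zl ord_less_Field by blast
    have "Min E \<le> Min T" using Min_mono_sub[OF fE limit.prems(2) False] .
    then have "z \<in> Af y (Min T)" using td_mono[OF limit(1)] z(1) by blast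
    moreover have "T \<in> famF r Af z" using limit.IH[OF zl z(2) limit.prems(2)] .
    ultimately show ?thesis using False unfolding famF_limit[OF limit(1)] by blast
  qed
qed

lemma Min_image_strict_mono:
  fixes E :: "nat set"
  assumes "finite E" "E \<noteq> {}" "strict_mono_on E \<phi>"
  shows "Min (\<phi> ` E) = \<phi> (Min E)"
proof (rule Min_eqI)
  show "finite (\<phi> ` E)" using assms by simp
  show "\<phi> (Min E) \<in> \<phi> ` E" using assms by simp
  fix x assume "x \<in> \<phi> ` E"
  then obtain j where j: "j \<in> E" "x = \<phi> j" by blast
  have "Min E \<le> j" using assms j by simp
  then show "\<phi> (Min E) \<le> x"
    using assms(3) j Min_in[OF assms(1,2)] unfolding strict_mono_on_def
    by (metis order.order_iff_strict order_less_imp_le)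
qed

lemma famF_spread: "y \<in> Field r \<Longrightarrow> E \<in> famF r Af y \<Longrightarrow> strict_mono_on E \<phi> \<Longrightarrow>
    (\<forall>j\<in>E. j \<le> \<phi> j) \<Longrightarrow> \<phi> ` E \<in> famF r Af y"
proof (induction y arbitrary: E rule: field_induct)
  case (zero y) then show ?case by (auto simp: famF_zero)
next
  case (succ p y)
  show ?case
  proof (cases "E = {}")
    case True then show ?thesis by (simp add: famF_succ[OF succ(1)])
  next
    case False
    then obtain n E0 where E: "E = insert n E0" "E0 \<in> famF r Af p"
      using succ.prems by (auto simp: famF_succ[OF succ(1)])
    have "strict_mono_on E0 \<phi>" using succ.prems(2) E unfolding strict_mono_on_def by blast
    then have "\<phi> ` E0 \<in> famF r Af p" using succ.IH[OF E(2)] succ.prems E by blast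
    moreover have "\<phi> ` E = insert (\<phi> n) (\<phi> ` E0)" using E by simp
    ultimately show ?thesis by (auto simp: famF_succ[OF succ(1)])
  qed
next
  case (limit y)
  show ?case
  proof (cases "E = {}")
    case True then show ?thesis by (simp add: famF_limit[OF limit(1)])
  next
    case False
    then obtain z where z: "z \<in> Af y (Min E)" "E \<in> famF r Af z"
      using limit.prems unfolding famF_limit[OF limit(1)] by blast
    have zl: "ord_less r z y" using td_less[OF limit(1) z(1)] .
    have fE: "finite E" using famF_finite z(2) zl ord_less_Field by blast
    have "Min (\<phi> ` E) = \<phi> (Min E)" using Min_image_strict_mono[OF fE False limit.prems(2)] .
    moreover have "Min E \<le> \<phi> (Min E)" using limit.prems(3) Min_in[OF fE False] by blast
    ultimately have "z \<in> Af y (Min (\<phi> ` E))" using td_mono[OF limit(1)] z(1) by auto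
    moreover have "\<phi> ` E \<in> famF r Af z" using limit.IH[OF zl z(2) limit.prems(2,3)] .
    ultimately show ?thesis using False unfolding famF_limit[OF limit(1)] by blast
  qed
qed

lemma famF_replace: "y \<in> Field r \<Longrightarrow> E \<in> famF r Af y \<Longrightarrow> e \<in> E \<Longrightarrow> i \<notin> E \<Longrightarrow> e < i \<Longrightarrow>
    insert i (E - {e}) \<in> famF r Af y"
proof (induction y arbitrary: E rule: field_induct)
  case (zero y) then show ?case by (auto simp: famF_zero)
next
  case (succ p y)
  obtain n E0 where E: "E = insert n E0" "E0 \<in> famF r Af p"
    using succ.prems by (auto simp: famF_succ[OF succ(1)])
  show ?case
  proof (cases "e = n \<and> n \<notin> E0")
    case True
    then have "insert i (E - {e}) = insert i E0" using E by auto
    then show ?thesis using E by (auto simp: famF_succ[OF succ(1)])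
  next
    case False
    then have eE0: "e \<in> E0" using E succ.prems by blast
    have iE0: "i \<notin> E0" using E succ.prems by blast
    have IH: "insert i (E0 - {e}) \<in> famF r Af p" using succ.IH[OF E(2) eE0 iE0 succ.prems(4)] .
    show ?thesis
    proof (cases "e = n")
      case True
      then have "insert i (E - {e}) = insert i (E0 - {e})" using E by auto
      then show ?thesis using IH famF_succ_sub[OF succ(1)] by simp
    next
      case False
      then have "insert i (E - {e}) = insert n (insert i (E0 - {e}))" using E by auto
      then show ?thesis using IH by (auto simp: famF_succ[OF succ(1)])
    qed
  qed
next
  case (limit y)
  have En: "E \<noteq> {}" using limit.prems by blast
  then obtain z where z: "z \<in> Af y (Min E)" "E \<in> famF r Af z"
    using limit.prems unfolding famF_limit[OF limit(1)] by blast
  have zl: "ord_less r z y" using td_less[OF limit(1) z(1)] .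
  have fE: "finite E" using famF_finite z(2) zl ord_less_Field by blast
  let ?E' = "insert i (E - {e})"
  have fE': "finite ?E'" using fE by simp
  have "Min E \<le> Min ?E'"
  proof -
    have "\<forall>x\<in>?E'. Min E \<le> x"
    proof
      fix x assume x: "x \<in> ?E'"
      have me: "Min E \<le> e" using Min_le[OF fE limit.prems(2)] .
      show "Min E \<le> x"
      proof (cases "x = i")
        case True then show ?thesis using me limit.prems(4) by simp
      next
        case False then show ?thesis using x Min_le[OF fE] by simp
      qed
    qed
    then show ?thesis using fE' by simp
  qed
  then have "z \<in> Af y (Min ?E')" using td_mono[OF limit(1)] z(1) by blast
  moreover have "?E' \<in> famF r Af z" using limit.IH[OF zl z(2) limit.prems(2-4)] .
  ultimately show ?case unfolding famF_limit[OF limit(1)] by blast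
qed

lemma famF_remove_min:
  assumes a: "is_succ_of r p y" and T: "T \<in> famF r Af y" "T \<noteq> {}"
  shows "T - {Min T} \<in> famF r Af p"
proof -
  have pF: "p \<in> Field r" using a ord_less_Field unfolding is_succ_of_def by blast
  obtain i E where E: "T = insert i E" "E \<in> famF r Af p"
    using T by (auto simp: famF_succ[OF a])
  have fE: "finite E" using famF_finite[OF pF E(2)] .
  show ?thesis
  proof (cases "i \<in> E")
    case True
    then have "T = E" using E by blast
    then show ?thesis using famF_hered[OF pF E(2)] by blast
  next
    case iE: False
    show ?thesis
    proof (cases "E = {}")
      case True then show ?thesis using E famF_empty[OF pF] by simp
    next
      case En: False
      show ?thesis
      proof (cases "i < Min E")
        case True
        have "Min T = i" using E fE En True by (simp add: Min_insert)
        then have "T - {Min T} = E" using E iE by blast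
        then show ?thesis using E by simp
      next
        case False
        then have lt: "Min E < i" using iE Min_in[OF fE En] by (metis linorder_neqE_nat)
        have "Min T = Min E" using E fE En lt by (simp add: Min_insert)
        then have "T - {Min T} = insert i (E - {Min E})" using E iE lt by auto
        then show ?thesis using famF_replace[OF pF E(2) Min_in[OF fE En] iE lt] by simp
      qed
    qed
  qed
qed

lemma famF_rank: "y \<in> Field r \<Longrightarrow> {} \<in> deriv r (famF r Af y) y"
proof (induction y rule: field_induct)
  case (zero y) then show ?case by (simp add: deriv_zero famF_zero)
next
  case (succ p y)
  have pF: "p \<in> Field r" using succ(1) ord_less_Field unfolding is_succ_of_def by blast
  have yF: "y \<in> Field r" using succ(1) ord_less_Field unfolding is_succ_of_def by blast
  have sub: "\<And>n. insert n ` famF r Af p \<subseteq> famF r Af y"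
    unfolding famF_succ[OF succ(1)] by blast
  have sing: "\<And>n. {n} \<in> deriv r (famF r Af y) p"
  proof -
    fix n
    have "insert n {} \<in> deriv r (insert n ` famF r Af p) p"
      using deriv_shift_in[OF pF succ.IH] .
    then show "{n} \<in> deriv r (famF r Af y) p" using deriv_mono[OF pF sub] by blast
  qed
  have h: "hereditary (deriv r (famF r Af y) p)"
    using deriv_hered[OF pF] famF_hered[OF yF] unfolding hereditary_def by blast
  have "{} \<in> deriv r (famF r Af y) p" using h sing unfolding hereditary_def by blast
  then show ?case unfolding deriv_succ[OF succ(1)] derive1_def using sing by auto
next
  case (limit y)
  have yF: "y \<in> Field r" using limit(1) unfolding is_limit_def by blast
  show ?case unfolding deriv_limit[OF limit(1)]
  proof (rule InterI)
    fix X assume "X \<in> {deriv r (famF r Af y) z |z. ord_less r z y}"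
    then obtain z where z: "X = deriv r (famF r Af y) z" "ord_less r z y" by blast
    obtain n w where w: "w \<in> Af y n" "(z, w) \<in> r" using td_cof[OF limit(1) z(2)] by blast
    have wl: "ord_less r w y" using td_less[OF limit(1) w(1)] .
    have wF: "w \<in> Field r" using wl ord_less_Field by blast
    have zF: "z \<in> Field r" using z ord_less_Field by blast
    have "{} \<in> deriv r (famF r Af w) z" using limit.IH[OF wl] deriv_decr[OF wF w(2)] by blast
    then have "{} \<in> deriv r (famF r Af w \<inter> {S. S \<subseteq> {n..}}) z"
    proof -
      have "UNIV - {n..} = {..<n}" by auto
      then have "finite (UNIV - {n..})" by simp
      then show ?thesis using deriv_restrict[OF zF, of "famF r Af w" UNIV "{n..}"]
        \<open>{} \<in> deriv r (famF r Af w) z\<close> by simp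
    qed
    moreover have "famF r Af w \<inter> {S. S \<subseteq> {n..}} \<subseteq> famF r Af y"
    proof
      fix E assume E: "E \<in> famF r Af w \<inter> {S. S \<subseteq> {n..}}"
      show "E \<in> famF r Af y"
      proof (cases "E = {}")
        case True then show ?thesis using famF_empty[OF yF] by simp
      next
        case False
        have fE: "finite E" using famF_finite[OF wF] E by blast
        have "n \<le> Min E" using Min_in[OF fE False] E by auto
        then have "w \<in> Af y (Min E)" using td_mono[OF limit(1)] w(1) by blast
        then show ?thesis using E False unfolding famF_limit[OF limit(1)] by blast
      qed
    qed
    ultimately show "{} \<in> X" using z deriv_mono[OF zF] by blast
  qed
qed

lemma forward:
  assumes xF: "x \<in> Field r" and lg: "large r Af x A P" and Q: "Q \<subseteq> P" "infinite Q"
  shows "CB_ge_succ r x (A \<inter> {S. S \<subseteq> Q})"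
proof -
  obtain N where N: "N \<subseteq> Q" "infinite N" "famF_on (famF r Af x) N \<subseteq> A"
    using lg Q unfolding large_def by blast
  let ?e = "enumerate N"
  have inj: "inj ?e" using inj_enumerate[OF N(2)] .
  have "?e ` {} \<in> deriv r ((\<lambda>E. ?e ` E) ` famF r Af x) x"
    using deriv_image[OF xF inj famF_rank[OF xF]] .
  moreover have sub: "(\<lambda>E. ?e ` E) ` famF r Af x \<subseteq> A \<inter> {S. S \<subseteq> Q}"
    using N enumerate_in_set[OF N(2)] unfolding famF_on_def by blast
  ultimately have e: "{} \<in> deriv r (A \<inter> {S. S \<subseteq> Q}) x"
    using deriv_mono[OF xF sub] by auto
  show ?thesis unfolding CB_ge_succ_def
  proof (intro allI impI)
    fix y assume "(y, x) \<in> r"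
    then show "deriv r (A \<inter> {S. S \<subseteq> Q}) y \<noteq> {}" using deriv_decr[OF xF] e by blast
  qed
qed

lemma famF_transfer:
  fixes g :: "nat \<Rightarrow> nat"
  assumes yF: "y \<in> Field r" and E: "E \<in> famF r Af y" and sm: "strict_mono g" and L: "infinite L"
    and c: "\<forall>j\<in>E. g j \<in> L \<and> enumerate L j \<le> g j"
  shows "g ` E \<in> famF_on (famF r Af y) L"
proof -
  define \<phi> where "\<phi> j = inv (enumerate L) (g j)" for j
  have bij: "bij_betw (enumerate L) UNIV L" using bij_enumerate[OF L] .
  have ephi: "enumerate L (\<phi> j) = g j" if "j \<in> E" for j
    unfolding \<phi>_def using c that bij by (simp add: bij_betw_inv_into_right)
  have smo: "strict_mono_on E \<phi>"
    unfolding strict_mono_on_def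
  proof (intro allI impI)
    fix i j assume "i \<in> E \<and> j \<in> E \<and> i < j"
    then have ij: "i \<in> E" "j \<in> E" "i < j" by auto
    then have "enumerate L (\<phi> i) < enumerate L (\<phi> j)" using ephi sm by (simp add: strict_mono_less)
    then show "\<phi> i < \<phi> j" using L by simp
  qed
  have ge: "\<forall>j\<in>E. j \<le> \<phi> j"
  proof
    fix j assume j: "j \<in> E"
    then have "enumerate L j \<le> enumerate L (\<phi> j)" using ephi c by simp
    then show "j \<le> \<phi> j" using L by simp
  qed
  have "\<phi> ` E \<in> famF r Af y" using famF_spread[OF yF E smo ge] .
  moreover have "enumerate L ` (\<phi> ` E) = g ` E" using ephi by (auto simp: image_image)
  ultimately show ?thesis unfolding famF_on_def by (metis image_eqI)
qed

lemma famF_on_subset: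
  assumes yF: "y \<in> Field r" and N': "infinite N'" "N' \<subseteq> N"
  shows "famF_on (famF r Af y) N' \<subseteq> famF_on (famF r Af y) N"
proof
  fix S assume "S \<in> famF_on (famF r Af y) N'"
  then obtain E where E: "E \<in> famF r Af y" "S = enumerate N' ` E" unfolding famF_on_def by blast
  have N: "infinite N" using N' infinite_super by blast
  have "enumerate N' ` E \<in> famF_on (famF r Af y) N"
    using famF_transfer[OF yF E(1) strict_mono_enumerate[OF N'(1)] N] enum_subset[OF N']
      enumerate_in_set[OF N'(1)] N'(2) by blast
  then show "S \<in> famF_on (famF r Af y) N" using E by simp
qed

lemma backward:
  "y \<in> Field r \<Longrightarrow> \<forall>B M. hereditary B \<longrightarrow> infinite M \<longrightarrow>
     (\<forall>Q. Q \<subseteq> M \<and> infinite Q \<longrightarrow> {} \<in> deriv r (B \<inter> {S. S \<subseteq> Q}) y) \<longrightarrow>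
     (\<exists>N. N \<subseteq> M \<and> infinite N \<and> famF_on (famF r Af y) N \<subseteq> B)"
proof (induction y rule: field_induct)
  case (zero y)
  show ?case
  proof (intro allI impI)
    fix B M assume B: "hereditary B" and M: "infinite M"
      and H: "\<forall>Q. Q \<subseteq> M \<and> infinite Q \<longrightarrow> {} \<in> deriv r (B \<inter> {S. S \<subseteq> Q}) y"
    have "{} \<in> deriv r (B \<inter> {S. S \<subseteq> M}) y" using H M by blast
    then have "{} \<in> B" by (simp add: deriv_zero[OF zero(1)])
    then have "famF_on (famF r Af y) M \<subseteq> B" by (simp add: famF_zero[OF zero(1)] famF_on_def)
    then show "\<exists>N. N \<subseteq> M \<and> infinite N \<and> famF_on (famF r Af y) N \<subseteq> B" using M by blast
  qed
next
  case (succ p y)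
  have pF: "p \<in> Field r" using succ(1) ord_less_Field unfolding is_succ_of_def by blast
  have yF: "y \<in> Field r" using succ(1) ord_less_Field unfolding is_succ_of_def by blast
  show ?case
  proof (intro allI impI)
    fix B M assume B: "hereditary B" and M: "infinite M"
      and H: "\<forall>Q. Q \<subseteq> M \<and> infinite Q \<longrightarrow> {} \<in> deriv r (B \<inter> {S. S \<subseteq> Q}) y"
    have H': "{} \<in> derive1 (deriv r (B \<inter> {S. S \<subseteq> Q}) p)" if "Q \<subseteq> M" "infinite Q" for Q
      using H that deriv_succ[OF succ(1)] by auto
    have eB: "{} \<in> B" using H'[of M] M deriv_sub[OF pF] derive1_sub by blast
    have Hq: "\<exists>m\<in>L. {} \<in> deriv r {T. insert m T \<in> B \<and> insert m T \<subseteq> L} p"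
      if LL: "L \<subseteq> M" "infinite L" for L
    proof -
      obtain K where K: "infinite K" "\<forall>m\<in>K. insert m {} \<in> deriv r (B \<inter> {S. S \<subseteq> L}) p"
        using H'[OF LL] unfolding derive1_def by blast
      obtain m where mK: "m \<in> K" using K(1) infinite_imp_nonempty by blast
      have m1: "{m} \<in> deriv r (B \<inter> {S. S \<subseteq> L}) p" using K(2) mK by simp
      then have "m \<in> L" using deriv_sub[OF pF] by blast
      moreover have "{} \<in> deriv r {T. insert m T \<in> B \<inter> {S. S \<subseteq> L}} p"
        using deriv_shift_out[OF pF m1] .
      moreover have "{T. insert m T \<in> B \<inter> {S. S \<subseteq> L}} = {T. insert m T \<in> B \<and> insert m T \<subseteq> L}"
        by blast
      ultimately show ?thesis by metis
    qed
    have stepQ: "\<exists>n L. n \<in> Q \<and> L \<subseteq> Q \<and> infinite L \<and>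
        famF_on (famF r Af p) L \<subseteq> {T. insert n T \<in> B}"
      if Q: "Q \<subseteq> M" "infinite Q" for Q
    proof -
      obtain Q' n where g: "Q' \<subseteq> Q" "infinite Q'" "n \<in> Q"
        "\<forall>Q''. Q'' \<subseteq> Q' \<and> infinite Q'' \<longrightarrow> {} \<in> deriv r ({T. insert n T \<in> B} \<inter> {S. S \<subseteq> Q''}) p"
      proof -
        have HqQ: "\<exists>m\<in>L. {} \<in> deriv r {T. insert m T \<in> B \<and> insert m T \<subseteq> L} p"
          if "L \<subseteq> Q" "infinite L" for L
          using Hq[of L] that Q(1) by blast
        show ?thesis using good_exists[OF pF Q(2) HqQ] that by blast
      qed
      have hn: "hereditary {T. insert n T \<in> B}"
        unfolding hereditary_def
      proof (intro ballI allI impI)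
        fix S T assume S: "S \<in> {T. insert n T \<in> B}" and T: "T \<subseteq> S"
        have "insert n T \<subseteq> insert n S" using T by blast
        then show "T \<in> {T. insert n T \<in> B}" using B S unfolding hereditary_def by blast
      qed
      obtain L where L: "L \<subseteq> Q'" "infinite L" "famF_on (famF r Af p) L \<subseteq> {T. insert n T \<in> B}"
        using succ.IH[THEN spec[of _ "{T. insert n T \<in> B}"], THEN spec[of _ Q']] hn g(2) g(4) by blast
      then show ?thesis using g by blast
    qed
    obtain f Ls where fL: "strict_mono f" "\<forall>j. f j \<in> M"
      "\<forall>k. famF_on (famF r Af p) (Ls k) \<subseteq> {T. insert (f k) T \<in> B} \<and> infinite (Ls k)"
      "\<forall>k j. k < j \<longrightarrow> f j \<in> Ls k \<and> enumerate (Ls k) j \<le> f j"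
    proof -
      have "\<exists>f Ls. strict_mono f \<and> (\<forall>j. f j \<in> M) \<and>
        (\<forall>k. famF_on (famF r Af p) (Ls k) \<subseteq> {T. insert (f k) T \<in> B} \<and> infinite (Ls k)) \<and>
        (\<forall>k j. k < j \<longrightarrow> f j \<in> Ls k \<and> enumerate (Ls k) j \<le> f j)"
        by (rule diag[OF M, of "\<lambda>k n L. famF_on (famF r Af p) L \<subseteq> {T. insert n T \<in> B}"])
          (rule stepQ)
      then show ?thesis using that by blast
    qed
    let ?N = "range f"
    have Ninf: "infinite ?N" using fL(1) strict_mono_imp_inj_on finite_imageD by blast
    have en: "enumerate ?N = f" using enum_range[OF fL(1)] by blast
    have "famF_on (famF r Af y) ?N \<subseteq> B"
    proof
      fix S assume "S \<in> famF_on (famF r Af y) ?N"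
      then obtain T where T: "T \<in> famF r Af y" "S = f ` T" unfolding famF_on_def en by blast
      show "S \<in> B"
      proof (cases "T = {}")
        case True then show ?thesis using T eB by simp
      next
        case False
        let ?k = "Min T"
        have fT: "finite T" using famF_finite[OF yF T(1)] .
        have T': "T - {?k} \<in> famF r Af p" using famF_remove_min[OF succ(1) T(1) False] .
        have gt: "\<forall>j\<in>T - {?k}. ?k < j"
        proof
          fix j assume j: "j \<in> T - {?k}"
          then have "?k \<le> j" using Min_le[OF fT] by blast
          moreover have "j \<noteq> ?k" using j by blast
          ultimately show "?k < j" by simp
        qed
        have c: "\<forall>j\<in>T - {?k}. f j \<in> Ls ?k \<and> enumerate (Ls ?k) j \<le> f j"
          using fL(4) gt by blast
        have inf: "infinite (Ls ?k)" using fL(3) by blast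
        have "f ` (T - {?k}) \<in> famF_on (famF r Af p) (Ls ?k)"
          using famF_transfer[OF pF T' fL(1) inf c] .
        moreover have "famF_on (famF r Af p) (Ls ?k) \<subseteq> {T. insert (f ?k) T \<in> B}" using fL(3) by blast
        ultimately have "insert (f ?k) (f ` (T - {?k})) \<in> B" by blast
        moreover have "insert (f ?k) (f ` (T - {?k})) = S"
          using T(2) Min_in[OF fT False] by auto
        ultimately show ?thesis by simp
      qed
    qed
    moreover have "?N \<subseteq> M" using fL(2) by blast
    ultimately show "\<exists>N. N \<subseteq> M \<and> infinite N \<and> famF_on (famF r Af y) N \<subseteq> B" using Ninf by blast
  qed
next
  case (limit y)
  have yF: "y \<in> Field r" using limit(1) unfolding is_limit_def by blast
  show ?case
  proof (intro allI impI)
    fix B M assume B: "hereditary B" and M: "infinite M"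
      and H: "\<forall>Q. Q \<subseteq> M \<and> infinite Q \<longrightarrow> {} \<in> deriv r (B \<inter> {S. S \<subseteq> Q}) y"
    have H': "{} \<in> deriv r (B \<inter> {S. S \<subseteq> Q}) z" if "Q \<subseteq> M" "infinite Q" "ord_less r z y" for Q z
      using H that unfolding deriv_limit[OF limit(1)] by blast
    obtain z0 where z0: "ord_less r z0 y" using limit_has_less[OF limit(1)] by blast
    have eB: "{} \<in> B" using H'[OF _ M z0] deriv_sub[of z0] z0 ord_less_Field by blast
    have IHz: "\<exists>N. N \<subseteq> M' \<and> infinite N \<and> famF_on (famF r Af z) N \<subseteq> B"
      if "ord_less r z y" "M' \<subseteq> M" "infinite M'" for z M'
    proof -
      have "\<forall>Q. Q \<subseteq> M' \<and> infinite Q \<longrightarrow> {} \<in> deriv r (B \<inter> {S. S \<subseteq> Q}) z"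
        using H' that by blast
      then show ?thesis using limit.IH[OF that(1), THEN spec[of _ B], THEN spec[of _ M']] B that(3) by blast
    qed
    have fin: "finite Z \<Longrightarrow> (\<forall>z\<in>Z. ord_less r z y) \<longrightarrow> (\<forall>Q. Q \<subseteq> M \<and> infinite Q \<longrightarrow>
        (\<exists>N. N \<subseteq> Q \<and> infinite N \<and> (\<forall>z\<in>Z. famF_on (famF r Af z) N \<subseteq> B)))" for Z
    proof (induction Z rule: finite_induct)
      case empty then show ?case by blast
    next
      case (insert z Z)
      show ?case
      proof (intro impI allI)
        fix Q assume zs: "\<forall>z\<in>insert z Z. ord_less r z y" and Q: "Q \<subseteq> M \<and> infinite Q"
        obtain N1 where N1: "N1 \<subseteq> Q" "infinite N1" "\<forall>z\<in>Z. famF_on (famF r Af z) N1 \<subseteq> B"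
          using insert.IH zs Q by blast
        obtain N2 where N2: "N2 \<subseteq> N1" "infinite N2" "famF_on (famF r Af z) N2 \<subseteq> B"
          using IHz[of z N1] zs N1 Q by blast
        have "\<forall>z'\<in>Z. famF_on (famF r Af z') N2 \<subseteq> B"
        proof
          fix z' assume z': "z' \<in> Z"
          then have "z' \<in> Field r" using zs ord_less_Field by blast
          then show "famF_on (famF r Af z') N2 \<subseteq> B"
            using famF_on_subset[OF _ N2(2,1)] N1(3) z' by blast
        qed
        then show "\<exists>N. N \<subseteq> Q \<and> infinite N \<and> (\<forall>z\<in>insert z Z. famF_on (famF r Af z) N \<subseteq> B)"
          using N1 N2 by blast
      qed
    qed
    have stepQ: "\<exists>n L. n \<in> Q \<and> L \<subseteq> Q \<and> infinite L \<and>
        (n \<in> L \<and> enumerate L k \<le> n \<and> (\<forall>z\<in>Af y k. famF_on (famF r Af z) L \<subseteq> B))"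
      if Q: "Q \<subseteq> M" "infinite Q" for Q k
    proof -
      have zs: "\<forall>z\<in>Af y k. ord_less r z y" using td_less[OF limit(1)] by blast
      have X: "\<forall>Q. Q \<subseteq> M \<and> infinite Q \<longrightarrow>
        (\<exists>N. N \<subseteq> Q \<and> infinite N \<and> (\<forall>z\<in>Af y k. famF_on (famF r Af z) N \<subseteq> B))"
        using fin[OF td_finite[OF limit(1)], of k] zs by (rule mp)
      obtain N where N: "N \<subseteq> Q" "infinite N" "\<forall>z\<in>Af y k. famF_on (famF r Af z) N \<subseteq> B"
        using X Q by blast
      have "enumerate N k \<in> N" using enumerate_in_set[OF N(2)] .
      then show ?thesis using N by blast
    qed
    obtain f Ls where fL: "strict_mono f" "\<forall>j. f j \<in> M"
      "\<forall>k. (f k \<in> Ls k \<and> enumerate (Ls k) k \<le> f k \<and> (\<forall>z\<in>Af y k. famF_on (famF r Af z) (Ls k) \<subseteq> B))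
         \<and> infinite (Ls k)"
      "\<forall>k j. k < j \<longrightarrow> f j \<in> Ls k \<and> enumerate (Ls k) j \<le> f j"
    proof -
      have "\<exists>f Ls. strict_mono f \<and> (\<forall>j. f j \<in> M) \<and>
        (\<forall>k. (f k \<in> Ls k \<and> enumerate (Ls k) k \<le> f k \<and> (\<forall>z\<in>Af y k. famF_on (famF r Af z) (Ls k) \<subseteq> B))
         \<and> infinite (Ls k)) \<and>
        (\<forall>k j. k < j \<longrightarrow> f j \<in> Ls k \<and> enumerate (Ls k) j \<le> f j)"
        by (rule diag[OF M, of "\<lambda>k n L. n \<in> L \<and> enumerate L k \<le> n \<and> (\<forall>z\<in>Af y k. famF_on (famF r Af z) L \<subseteq> B)"])
          (rule stepQ)
      then show ?thesis using that by blast
    qed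
    let ?N = "range f"
    have Ninf: "infinite ?N" using fL(1) strict_mono_imp_inj_on finite_imageD by blast
    have en: "enumerate ?N = f" using enum_range[OF fL(1)] by blast
    have "famF_on (famF r Af y) ?N \<subseteq> B"
    proof
      fix S assume "S \<in> famF_on (famF r Af y) ?N"
      then obtain T where T: "T \<in> famF r Af y" "S = f ` T" unfolding famF_on_def en by blast
      show "S \<in> B"
      proof (cases "T = {}")
        case True then show ?thesis using T eB by simp
      next
        case False
        then obtain z where z: "z \<in> Af y (Min T)" "T \<in> famF r Af z"
          using T(1) unfolding famF_limit[OF limit(1)] by blast
        let ?k = "Min T"
        have zl: "ord_less r z y" using td_less[OF limit(1) z(1)] .
        have zF: "z \<in> Field r" using zl ord_less_Field by blast
        have fT: "finite T" using famF_finite[OF zF z(2)] .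
        have c: "\<forall>j\<in>T. f j \<in> Ls ?k \<and> enumerate (Ls ?k) j \<le> f j"
        proof
          fix j assume j: "j \<in> T"
          then have "?k \<le> j" using fT by simp
          then show "f j \<in> Ls ?k \<and> enumerate (Ls ?k) j \<le> f j"
            using fL(3,4) by (cases "?k = j") auto
        qed
        have inf: "infinite (Ls ?k)" using fL(3) by blast
        have "f ` T \<in> famF_on (famF r Af z) (Ls ?k)"
          using famF_transfer[OF zF z(2) fL(1) inf c] .
        moreover have "famF_on (famF r Af z) (Ls ?k) \<subseteq> B" using fL(3) z(1) by blast
        ultimately show ?thesis using T(2) by blast
      qed
    qed
    moreover have "?N \<subseteq> M" using fL(2) by blast
    ultimately show "\<exists>N. N \<subseteq> M \<and> infinite N \<and> famF_on (famF r Af y) N \<subseteq> B" using Ninf by blast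
  qed
qed

end

end

theorem corollary5p6:
  fixes r :: "'a rel" and x :: 'a and Af :: "'a \<Rightarrow> nat \<Rightarrow> 'a set"
    and \<A> :: "nat set set" and P :: "nat set"
  assumes "Well_order r" and "countable (Field r)" and "x \<in> Field r"
    and "transfinite_data r Af"
    and "\<forall>S\<in>\<A>. finite S" and "hereditary \<A>" and "compact_family \<A>"
    and "infinite P"
  shows "large r Af x \<A> P \<longleftrightarrow>
           (\<forall>Q. Q \<subseteq> P \<and> infinite Q \<longrightarrow> CB_ge_succ r x (\<A> \<inter> {S. S \<subseteq> Q}))"
proof
  assume lg: "large r Af x \<A> P"
  show "\<forall>Q. Q \<subseteq> P \<and> infinite Q \<longrightarrow> CB_ge_succ r x (\<A> \<inter> {S. S \<subseteq> Q})"
    using forward[OF assms(1) assms(4) assms(3) lg] by blast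
next
  assume H: "\<forall>Q. Q \<subseteq> P \<and> infinite Q \<longrightarrow> CB_ge_succ r x (\<A> \<inter> {S. S \<subseteq> Q})"
  have hA: "hereditary \<A>" using assms(6) .
  show "large r Af x \<A> P" unfolding large_def
  proof (intro allI impI)
    fix M assume M: "M \<subseteq> P \<and> infinite M"
    have X: "\<forall>Q. Q \<subseteq> M \<and> infinite Q \<longrightarrow> {} \<in> deriv r (\<A> \<inter> {S. S \<subseteq> Q}) x"
    proof (intro allI impI)
      fix Q assume Q: "Q \<subseteq> M \<and> infinite Q"
      then have cb: "CB_ge_succ r x (\<A> \<inter> {S. S \<subseteq> Q})" using H M by blast
      have ne: "deriv r (\<A> \<inter> {S. S \<subseteq> Q}) x \<noteq> {}"
        using cb refl_r[OF assms(1) assms(3)] unfolding CB_ge_succ_def by blast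
      have hQ: "hereditary (\<A> \<inter> {S. S \<subseteq> Q})" using hA unfolding hereditary_def by blast
      have "hereditary (deriv r (\<A> \<inter> {S. S \<subseteq> Q}) x)"
        using deriv_hered[OF assms(1) assms(3) hQ] .
      then show "{} \<in> deriv r (\<A> \<inter> {S. S \<subseteq> Q}) x" using ne unfolding hereditary_def by blast
    qed
    have "hereditary \<A> \<longrightarrow> infinite M \<longrightarrow>
     (\<forall>Q. Q \<subseteq> M \<and> infinite Q \<longrightarrow> {} \<in> deriv r (\<A> \<inter> {S. S \<subseteq> Q}) x) \<longrightarrow>
     (\<exists>N. N \<subseteq> M \<and> infinite N \<and> famF_on (famF r Af x) N \<subseteq> \<A>)"
      using backward[OF assms(1) assms(4) assms(3)] by blast
    then show "\<exists>N. N \<subseteq> M \<and> infinite N \<and> famF_on (famF r Af x) N \<subseteq> \<A>"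
      using hA M X by blast
  qed
qed

end
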